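(* Assume (H1)–(H4) and the data below. Let $d_1\ge d_0$, where $d_0$ is such that for all $d_1\ge d_0$ the function $\underline v^1$ below satisfies the sub-solution inequality of $(E_z)$ pointwise on $\mathbb R\times\mathbb R^N$ (such $d_0$ exists). Let $b>0$ be so small that $b\phi_0(x+z)$ satisfies $\int k(y-x)b\phi_0(y+z)dy-b\phi_0(x+z)+f(x+z,b\phi_0(x+z))b\phi_0(x+z)\ge0$ for all $x,z$, and let $M>0$ be such that $\underline v^1(t,x;z,T)\ge b$ whenever $M-2\delta_0\le x\cdot\xi+cT-ct\le M$ (for all $z,T$). For $z\in\mathbb R^N$, $T>0$ define $$\underline u(t,x)=\begin{cases}\max\{b\phi_0(x+z),\ \underline v^1(t,x;z,T)\}, & x\cdot\xi+cT-ct<M,\\ \underline v^1(t,x;z,T), & x\cdot\xi+cT-ct\ge M,\end{cases}$$ where $\underline v^1(t,x;z,T)=e^{-\mu(x\cdot\xi+cT-ct)}\phi(x+z)-d_1e^{-\mu_1(x\cdot\xi+cT-ct)}\phi_1(x+z)$. Then $\underline u$ is a sub-solution of $(E_z)$: for each $x$, $t\mapsto\underline u(t,x)$ is continuous and differentiable for a.e. $t$, and at every such $t$, $\partial_t\underline u(t,x)\le\int k(y-x)\underline u(t,y)dy-\underline u(t,x)+\underline u(t,x)f(x+z,\underline u(t,x))$.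
   Context: Setting: $N\ge1$, $S^{N-1}$ unit sphere, $e_i$ standard basis vectors. $k\in C^1(\mathbb R^N)$, $k(z)>0$ for $\|z\|<\delta_0$, $k(z)=0$ for $\|z\|\ge\delta_0$ (some $\delta_0>0$), $\int k=1$. $f:\mathbb R^N\times\mathbb R\to\mathbb R$ with $f(x+p_ie_i,u)=f(x,u)$ for given periods $p_i>0$. $(E_z)$: $\partial_tu=\int_{\mathbb R^N}k(y-x)u(t,y)dy-u(t,x)+u(t,x)f(x+z,u(t,x))$. $X_p$: continuous $p$-periodic functions with sup norm, $X_p^+$ nonnegative ones; $a_0(x)=f(x,0)$; $(\mathcal K_{\xi,\mu}v)(x)=\int e^{-\mu(y-x)\cdot\xi}k(y-x)v(y)dy$, $\mathcal K=\mathcal K_{\xi,0}$; $\lambda_0(\xi,\mu,a_0)=\sup\{\mathrm{Re}\lambda:\lambda\in\sigma(\mathcal K_{\xi,\mu}-I+a_0I)\}$ on $X_p$; $\lambda_0=\lambda_0(\xi,0,a_0)$. Principal eigenvalue: algebraically simple eigenvalue with eigenfunction in $X_p^+$, rest of spectrum has smaller real part. (H1) $f\in C^1(\mathbb R^N\times[0,\infty))$, $\sup_{x,u\ge0}\partial_uf<0$, $f(x,u)<0$ for $u$ large. (H2) $\lambda_0>0$. (H3) for all $\xi\in S^{N-1}$, $\mu\ge0$, $\lambda_0(\xi,\mu,a_0)$ is the principal eigenvalue of $\mathcal K_{\xi,\mu}-I+a_0I$. (H4) $f(x,u)=f(x,0)$ for $u\le0$. Known: for each $\xi$ there is $\mu^*(\xi)>0$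 with $c^*(\xi):=\inf_{\mu>0}\lambda_0(\xi,\mu,a_0)/\mu=\lambda_0(\xi,\mu^*(\xi),a_0)/\mu^*(\xi)<\lambda_0(\xi,\mu,a_0)/\mu$ for $\mu\in(0,\mu^*(\xi))$. Data: fix $\xi\in S^{N-1}$, $c>c^*(\xi)$, $\mu\in(0,\mu^*(\xi))$ with $\lambda_0(\xi,\mu,a_0)=c\mu$, and $\mu_1\in(\mu,\min\{2\mu,\mu^*(\xi)\})$ with $c^*(\xi)<\lambda_0(\xi,\mu_1,a_0)/\mu_1<c$. $\phi,\phi_1,\phi_0\in X_p^+$ are positive principal eigenfunctions of $\mathcal K_{\xi,\mu}-I+a_0I$, $\mathcal K_{\xi,\mu_1}-I+a_0I$, $\mathcal K-I+a_0I$ respectively, each with sup equal to $1$. *)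

theory Defs
  imports "HOL-Analysis.Analysis"
begin

definition C1_on :: "'a::real_normed_vector set \<Rightarrow> ('a \<Rightarrow> 'b::real_normed_vector) \<Rightarrow> bool" where
  "C1_on S F \<longleftrightarrow> (\<exists>D. (\<forall>q\<in>S. (F has_derivative blinfun_apply (D q)) (at q within S))
                        \<and> continuous_on S D)"

text \<open>X_p: continuous p-periodic functions (values in a real normed space;
  real-valued for X_p itself, complex-valued for its complexification).\<close>
definition Xp :: "('n::finite \<Rightarrow> real) \<Rightarrow> (real^'n \<Rightarrow> 'b::real_normed_vector) set" where
  "Xp p = {v. continuous_on UNIV v \<and> (\<forall>x i. v (x + p i *\<^sub>R axis i 1) = v x)}"

definition Kop :: "(real^'n::finite \<Rightarrow> real) \<Rightarrow> real^'n \<Rightarrow> real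
                    \<Rightarrow> (real^'n \<Rightarrow> 'b::real_normed_vector) \<Rightarrow> real^'n \<Rightarrow> 'b" where
  "Kop k \<xi> \<mu> v = (\<lambda>x. integral UNIV (\<lambda>y. (exp (- \<mu> * ((y - x) \<bullet> \<xi>)) * k (y - x)) *\<^sub>R v y))"

definition Lop :: "(real^'n::finite \<Rightarrow> real) \<Rightarrow> (real^'n \<Rightarrow> real) \<Rightarrow> real^'n \<Rightarrow> real
                    \<Rightarrow> (real^'n \<Rightarrow> 'b::real_normed_vector) \<Rightarrow> real^'n \<Rightarrow> 'b" where
  "Lop k a0 \<xi> \<mu> v = (\<lambda>x. Kop k \<xi> \<mu> v x - v x + a0 x *\<^sub>R v x)"

text \<open>Spectrum of K_{xi,mu} - I + a0 I on X_p (via the complexification of X_p).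
  By the open mapping theorem, bijectivity on the Banach space suffices for a bounded inverse.\<close>
definition spec :: "('n::finite \<Rightarrow> real) \<Rightarrow> (real^'n \<Rightarrow> real) \<Rightarrow> (real^'n \<Rightarrow> real)
                     \<Rightarrow> real^'n \<Rightarrow> real \<Rightarrow> complex set" where
  "spec p k a0 \<xi> \<mu> = {l. \<not> bij_betw (\<lambda>v :: real^'n \<Rightarrow> complex. \<lambda>x. Lop k a0 \<xi> \<mu> v x - l * v x)
                                   (Xp p) (Xp p)}"

definition lambda0 :: "('n::finite \<Rightarrow> real) \<Rightarrow> (real^'n \<Rightarrow> real) \<Rightarrow> (real^'n \<Rightarrow> real)
                     \<Rightarrow> real^'n \<Rightarrow> real \<Rightarrow> real" where
  "lambda0 p k a0 \<xi> \<mu> = Sup (Re ` spec p k a0 \<xi> \<mu>)"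

text \<open>Principal eigenvalue: algebraically simple eigenvalue (generalized eigenspace in the
  complexified X_p is one-dimensional) with an eigenfunction in X_p^+, and all other spectral
  points have strictly smaller real part.\<close>
definition principal_eigenvalue :: "('n::finite \<Rightarrow> real) \<Rightarrow> (real^'n \<Rightarrow> real) \<Rightarrow> (real^'n \<Rightarrow> real)
                     \<Rightarrow> real^'n \<Rightarrow> real \<Rightarrow> real \<Rightarrow> bool" where
  "principal_eigenvalue p k a0 \<xi> \<mu> lam \<longleftrightarrow>
     (\<exists>\<phi> \<in> Xp p. (\<forall>x. \<phi> x \<ge> (0::real)) \<and> \<phi> \<noteq> (\<lambda>_. 0) \<and> Lop k a0 \<xi> \<mu> \<phi> = (\<lambda>x. lam * \<phi> x))
   \<and> (\<exists>\<psi> :: real^'n \<Rightarrow> complex. \<psi> \<noteq> (\<lambda>_. 0) \<and>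
        {v \<in> Xp p. \<exists>n. ((\<lambda>w. \<lambda>x. Lop k a0 \<xi> \<mu> w x - complex_of_real lam * w x) ^^ n) v = (\<lambda>_. 0)}
        = {(\<lambda>x. a * \<psi> x) | a. True})
   \<and> (\<forall>l \<in> spec p k a0 \<xi> \<mu>. l \<noteq> complex_of_real lam \<longrightarrow> Re l < lam)"

definition cstar :: "('n::finite \<Rightarrow> real) \<Rightarrow> (real^'n \<Rightarrow> real) \<Rightarrow> (real^'n \<Rightarrow> real)
                     \<Rightarrow> real^'n \<Rightarrow> real" where
  "cstar p k a0 \<xi> = Inf {lambda0 p k a0 \<xi> \<mu> / \<mu> | \<mu>. \<mu> > 0}"

definition vsub :: "real^'n::finite \<Rightarrow> real \<Rightarrow> real \<Rightarrow> real \<Rightarrow> (real^'n \<Rightarrow> real) \<Rightarrow> (real^'n \<Rightarrow> real)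
                    \<Rightarrow> real \<Rightarrow> real^'n \<Rightarrow> real \<Rightarrow> real \<Rightarrow> real^'n \<Rightarrow> real" where
  "vsub \<xi> c \<mu> \<mu>1 \<phi> \<phi>1 d z T t x =
     exp (- \<mu> * (x \<bullet> \<xi> + c * T - c * t)) * \<phi> (x + z)
     - d * exp (- \<mu>1 * (x \<bullet> \<xi> + c * T - c * t)) * \<phi>1 (x + z)"

definition usub :: "real^'n::finite \<Rightarrow> real \<Rightarrow> real \<Rightarrow> real \<Rightarrow> (real^'n \<Rightarrow> real) \<Rightarrow> (real^'n \<Rightarrow> real)
                    \<Rightarrow> (real^'n \<Rightarrow> real) \<Rightarrow> real \<Rightarrow> real \<Rightarrow> real
                    \<Rightarrow> real^'n \<Rightarrow> real \<Rightarrow> real \<Rightarrow> real^'n \<Rightarrow> real" where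
  "usub \<xi> c \<mu> \<mu>1 \<phi> \<phi>1 \<phi>0 d b M z T t x =
     (if x \<bullet> \<xi> + c * T - c * t < M
      then max (b * \<phi>0 (x + z)) (vsub \<xi> c \<mu> \<mu>1 \<phi> \<phi>1 d z T t x)
      else vsub \<xi> c \<mu> \<mu>1 \<phi> \<phi>1 d z T t x)"

end

theory Submission
  imports Defs
begin


lemma per_nat:
  assumes "\<forall>x i. g (x + p i *\<^sub>R axis i 1) = (g x :: real)"
  shows "g (x + (real n * p i) *\<^sub>R axis i 1) = g x"
proof (induction n arbitrary: x)
  case 0 then show ?case by simp
next
  case (Suc n)
  have "x + (real (Suc n) * p i) *\<^sub>R axis i 1 = (x + (real n * p i) *\<^sub>R axis i 1) + p i *\<^sub>R axis i 1"
    by (simp add: algebra_simps)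
  then show ?case using assms Suc by (simp only:)
qed

lemma per_int:
  assumes "\<forall>x i. g (x + p i *\<^sub>R axis i 1) = (g x :: real)"
  shows "g (x + (real_of_int n * p i) *\<^sub>R axis i 1) = g x"
proof (cases "n \<ge> 0")
  case True
  then obtain m where "n = int m" by (metis nonneg_int_cases)
  then show ?thesis using per_nat[OF assms] by simp
next
  case False
  then obtain m where m: "n = - int m" by (metis nonpos_int_cases linorder_not_le less_imp_le)
  have "g x = g ((x + (real_of_int n * p i) *\<^sub>R axis i 1) + (real m * p i) *\<^sub>R axis i 1)"
    using m by (simp add: algebra_simps)
  also have "\<dots> = g (x + (real_of_int n * p i) *\<^sub>R axis i 1)" by (rule per_nat[OF assms])
  finally show ?thesis by simp
qed

lemma per_sum:
  assumes "\<forall>x i. g (x + p i *\<^sub>R axis i 1) = (g x :: real)" "finite A"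
  shows "g (x + (\<Sum>i\<in>A. (real_of_int (n i) * p i) *\<^sub>R axis i 1)) = g x"
  using assms(2)
proof (induction A)
  case empty then show ?case by simp
next
  case (insert j A)
  have "x + (\<Sum>i\<in>insert j A. (real_of_int (n i) * p i) *\<^sub>R axis i 1)
     = (x + (\<Sum>i\<in>A. (real_of_int (n i) * p i) *\<^sub>R axis i 1)) + (real_of_int (n j) * p j) *\<^sub>R axis j 1"
    using insert by (simp add: algebra_simps)
  then show ?case using insert per_int[OF assms(1)] by (simp only:)
qed

lemma per_bounded:
  fixes g :: "real^'n::finite \<Rightarrow> real"
  assumes "g \<in> Xp p" "\<forall>i. p i > 0"
  shows "bounded (range g)"
proof -
  have per: "\<forall>x i. g (x + p i *\<^sub>R axis i 1) = g x" and cont: "continuous_on UNIV g"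
    using assms(1) by (auto simp: Xp_def)
  define q :: "real^'n" where "q = (\<chi> i. p i)"
  have "range g \<subseteq> g ` cbox 0 q"
  proof
    fix w assume "w \<in> range g"
    then obtain x where w: "w = g x" by auto
    define n where "n i = - \<lfloor>x $ i / p i\<rfloor>" for i
    define x0 where "x0 = x + (\<Sum>i\<in>UNIV. (real_of_int (n i) * p i) *\<^sub>R axis i 1)"
    have comp: "x0 $ j = x $ j - real_of_int \<lfloor>x $ j / p j\<rfloor> * p j" for j
      by (simp add: x0_def n_def axis_def sum_component if_distrib cong: if_cong)
    have "x0 \<in> cbox 0 q"
    proof -
      have "0 \<le> x0 $ j \<and> x0 $ j \<le> q $ j" for j
      proof -
        have pj: "p j > 0" using assms(2) by auto
        have a: "real_of_int \<lfloor>x $ j / p j\<rfloor> \<le> x $ j / p j" by linarith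
        have b: "x $ j / p j < real_of_int \<lfloor>x $ j / p j\<rfloor> + 1" by linarith
        from a pj have "real_of_int \<lfloor>x $ j / p j\<rfloor> * p j \<le> x $ j" by (simp add: le_divide_eq)
        moreover from b pj have "x $ j < (real_of_int \<lfloor>x $ j / p j\<rfloor> + 1) * p j" by (metis pos_divide_less_eq)
        ultimately show ?thesis using comp[of j] by (simp add: q_def algebra_simps)
      qed
      then show ?thesis by (simp add: mem_box_cart)
    qed
    moreover have "g x0 = g x" unfolding x0_def by (rule per_sum[OF per]) simp
    ultimately show "w \<in> g ` cbox 0 q" using w by (metis image_eqI)
  qed
  moreover have "compact (g ` cbox 0 q)"
    by (rule compact_continuous_image) (use cont continuous_on_subset in auto)
  ultimately show ?thesis by (meson bounded_subset compact_imp_bounded)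
qed



lemma glue_cont:
  fixes S V G :: "'a::topological_space \<Rightarrow> real"
  assumes "continuous_on UNIV S" "continuous_on UNIV V" "continuous_on UNIV G"
    and "\<And>a. S a = M \<Longrightarrow> G a \<le> V a"
  shows "continuous_on UNIV (\<lambda>a. if S a < M then max (G a) (V a) else V a)"
proof -
  have "continuous_on ({a. S a \<le> M} \<union> {a. M \<le> S a}) (\<lambda>a. if S a < M then max (G a) (V a) else V a)"
  proof (rule continuous_on_cases)
    show "closed {a. S a \<le> M}" using assms(1) by (simp add: closed_Collect_le)
    show "closed {a. M \<le> S a}" using assms(1) by (simp add: closed_Collect_le)
    show "continuous_on {a. S a \<le> M} (\<lambda>a. max (G a) (V a))"
      using assms(2,3) by (auto intro!: continuous_intros intro: continuous_on_subset)
    show "continuous_on {a. M \<le> S a} V" using assms(2) by (auto intro: continuous_on_subset)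
    show "\<forall>a. a \<in> {a. S a \<le> M} \<and> \<not> S a < M \<or> a \<in> {a. M \<le> S a} \<and> S a < M \<longrightarrow>
          max (G a) (V a) = V a"
      using assms(4) by force
  qed
  moreover have "{a. S a \<le> M} \<union> {a. M \<le> S a} = UNIV" by auto
  ultimately show ?thesis by simp
qed

lemma max_deriv0:
  fixes v :: "real \<Rightarrow> real"
  assumes "(v has_field_derivative 0) (at t)" "v t = g"
  shows "((\<lambda>s. max g (v s)) has_field_derivative 0) (at t)"
proof -
  have "((\<lambda>y. (v y - v t) / (y - t)) \<longlongrightarrow> 0) (at t)"
    using assms(1) by (simp add: has_field_derivative_iff)
  then have l: "((\<lambda>y. \<bar>(v y - v t) / (y - t)\<bar>) \<longlongrightarrow> 0) (at t)"
    using tendsto_rabs_zero by blast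
  have "((\<lambda>y. (max g (v y) - max g (v t)) / (y - t)) \<longlongrightarrow> 0) (at t)"
  proof (rule Lim_null_comparison[OF _ l])
    show "\<forall>\<^sub>F y in at t. norm ((max g (v y) - max g (v t)) / (y - t)) \<le> \<bar>(v y - v t) / (y - t)\<bar>"
    proof (rule always_eventually, rule allI)
      fix y
      have "\<bar>max g (v y) - max g (v t)\<bar> \<le> \<bar>v y - v t\<bar>" using assms(2) by auto
      then show "norm ((max g (v y) - max g (v t)) / (y - t)) \<le> \<bar>(v y - v t) / (y - t)\<bar>"
        by (simp add: abs_divide divide_right_mono)
    qed
  qed
  then show ?thesis by (simp add: has_field_derivative_iff)
qed

lemma int_compact:
  fixes k h :: "real^'n::finite \<Rightarrow> real"
  assumes "continuous_on UNIV k" "continuous_on UNIV h" "\<forall>w. norm w \<ge> \<delta> \<longrightarrow> k w = 0"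
  shows "(\<lambda>y. k (y - x) * h y) integrable_on UNIV"
proof -
  define a :: "real^'n" where "a = x - (\<chi> i. \<delta>)"
  define b :: "real^'n" where "b = x + (\<chi> i. \<delta>)"
  have "(\<lambda>y. k (y - x) * h y) integrable_on cbox a b"
    by (rule integrable_continuous) (use assms(1,2) in \<open>auto intro!: continuous_intros intro: continuous_on_subset continuous_on_compose2[OF assms(1)]\<close>)
  moreover have "k (y - x) * h y = 0" if yn: "y \<notin> cbox a b" for y
  proof -
    obtain i where "\<not> (a $ i \<le> y $ i \<and> y $ i \<le> b $ i)" using yn unfolding mem_box_cart by blast
    then have "\<delta> < \<bar>(y - x) $ i\<bar>" by (auto simp: a_def b_def)
    also have "\<dots> \<le> norm (y - x)" by (rule component_le_norm_cart)
    finally show ?thesis using assms(3) by simp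
  qed
  ultimately show ?thesis by (rule integrable_on_superset) auto
qed



theorem proposition3p4:
  fixes k :: "real^'n \<Rightarrow> real" and f :: "real^'n \<Rightarrow> real \<Rightarrow> real"
    and p :: "'n \<Rightarrow> real" and \<delta>0 :: real
    and \<xi> :: "real^'n" and c \<mu> \<mu>1 mustar :: real
    and \<phi> \<phi>1 \<phi>0 :: "real^'n \<Rightarrow> real"
    and d0 d1 b M :: real
  assumes k_C1: "C1_on UNIV k"
    and \<delta>0_pos: "\<delta>0 > 0"
    and k_pos: "\<forall>z. norm z < \<delta>0 \<longrightarrow> k z > 0"
    and k_zero: "\<forall>z. norm z \<ge> \<delta>0 \<longrightarrow> k z = 0"
    and k_int: "(k has_integral 1) UNIV"
    and p_pos: "\<forall>i. p i > 0"
    and f_per: "\<forall>x u i. f (x + p i *\<^sub>R axis i 1) u = f x u"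
    \<comment> \<open>(H1)\<close>
    and H1_C1: "C1_on (UNIV \<times> {0..}) (\<lambda>(x, u). f x u)"
    and H1_du: "\<exists>\<epsilon>>0. \<forall>x u D. u \<ge> 0 \<longrightarrow>
                    ((\<lambda>v. f x v) has_real_derivative D) (at u within {0..}) \<longrightarrow> D \<le> - \<epsilon>"
    and H1_neg: "\<exists>U. \<forall>x u. u \<ge> U \<longrightarrow> f x u < 0"
    \<comment> \<open>(H2)\<close>
    and H2: "lambda0 p k (\<lambda>x. f x 0) \<xi> 0 > 0"
    \<comment> \<open>(H3)\<close>
    and H3: "\<forall>\<xi>'. norm \<xi>' = 1 \<longrightarrow> (\<forall>\<mu>'\<ge>0.
               principal_eigenvalue p k (\<lambda>x. f x 0) \<xi>' \<mu>' (lambda0 p k (\<lambda>x. f x 0) \<xi>' \<mu>'))"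
    \<comment> \<open>(H4)\<close>
    and H4: "\<forall>x u. u \<le> 0 \<longrightarrow> f x u = f x 0"
    \<comment> \<open>data\<close>
    and \<xi>_unit: "norm \<xi> = 1"
    and mustar: "mustar > 0"
      "cstar p k (\<lambda>x. f x 0) \<xi> = lambda0 p k (\<lambda>x. f x 0) \<xi> mustar / mustar"
      "\<forall>m. 0 < m \<and> m < mustar \<longrightarrow> cstar p k (\<lambda>x. f x 0) \<xi> < lambda0 p k (\<lambda>x. f x 0) \<xi> m / m"
    and c_gt: "c > cstar p k (\<lambda>x. f x 0) \<xi>"
    and \<mu>_range: "0 < \<mu>" "\<mu> < mustar"
    and \<mu>_eq: "lambda0 p k (\<lambda>x. f x 0) \<xi> \<mu> = c * \<mu>"
    and \<mu>1_range: "\<mu> < \<mu>1" "\<mu>1 < min (2 * \<mu>) mustar"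
    and \<mu>1_ineq: "cstar p k (\<lambda>x. f x 0) \<xi> < lambda0 p k (\<lambda>x. f x 0) \<xi> \<mu>1 / \<mu>1"
                 "lambda0 p k (\<lambda>x. f x 0) \<xi> \<mu>1 / \<mu>1 < c"
    and \<phi>_eig: "\<phi> \<in> Xp p" "\<forall>x. \<phi> x > 0"
      "Lop k (\<lambda>x. f x 0) \<xi> \<mu> \<phi> = (\<lambda>x. lambda0 p k (\<lambda>x. f x 0) \<xi> \<mu> * \<phi> x)"
      "Sup (range \<phi>) = 1"
    and \<phi>1_eig: "\<phi>1 \<in> Xp p" "\<forall>x. \<phi>1 x > 0"
      "Lop k (\<lambda>x. f x 0) \<xi> \<mu>1 \<phi>1 = (\<lambda>x. lambda0 p k (\<lambda>x. f x 0) \<xi> \<mu>1 * \<phi>1 x)"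
      "Sup (range \<phi>1) = 1"
    and \<phi>0_eig: "\<phi>0 \<in> Xp p" "\<forall>x. \<phi>0 x > 0"
      "Lop k (\<lambda>x. f x 0) \<xi> 0 \<phi>0 = (\<lambda>x. lambda0 p k (\<lambda>x. f x 0) \<xi> 0 * \<phi>0 x)"
      "Sup (range \<phi>0) = 1"
    \<comment> \<open>choice of d0, d1\<close>
    and d0: "\<forall>d\<ge>d0. \<forall>z T t x. T > 0 \<longrightarrow>
               deriv (\<lambda>s. vsub \<xi> c \<mu> \<mu>1 \<phi> \<phi>1 d z T s x) t
               \<le> integral UNIV (\<lambda>y. k (y - x) * vsub \<xi> c \<mu> \<mu>1 \<phi> \<phi>1 d z T t y)
                 - vsub \<xi> c \<mu> \<mu>1 \<phi> \<phi>1 d z T t x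
                 + vsub \<xi> c \<mu> \<mu>1 \<phi> \<phi>1 d z T t x * f (x + z) (vsub \<xi> c \<mu> \<mu>1 \<phi> \<phi>1 d z T t x)"
    and d1: "d1 \<ge> d0"
    \<comment> \<open>choice of b\<close>
    and b_pos: "b > 0"
    and b_sub: "\<forall>x z. integral UNIV (\<lambda>y. k (y - x) * (b * \<phi>0 (y + z))) - b * \<phi>0 (x + z)
                     + f (x + z) (b * \<phi>0 (x + z)) * (b * \<phi>0 (x + z)) \<ge> 0"
    \<comment> \<open>choice of M\<close>
    and M_pos: "M > 0"
    and M_prop: "\<forall>z T t x. M - 2 * \<delta>0 \<le> x \<bullet> \<xi> + c * T - c * t \<and> x \<bullet> \<xi> + c * T - c * t \<le> M
                   \<longrightarrow> vsub \<xi> c \<mu> \<mu>1 \<phi> \<phi>1 d1 z T t x \<ge> b"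
  shows "\<forall>z T. T > 0 \<longrightarrow> (\<forall>x.
           continuous_on UNIV (\<lambda>t. usub \<xi> c \<mu> \<mu>1 \<phi> \<phi>1 \<phi>0 d1 b M z T t x)
         \<and> (AE t in lborel. (\<lambda>t. usub \<xi> c \<mu> \<mu>1 \<phi> \<phi>1 \<phi>0 d1 b M z T t x) differentiable (at t))
         \<and> (\<forall>t. (\<lambda>t. usub \<xi> c \<mu> \<mu>1 \<phi> \<phi>1 \<phi>0 d1 b M z T t x) differentiable (at t) \<longrightarrow>
              deriv (\<lambda>s. usub \<xi> c \<mu> \<mu>1 \<phi> \<phi>1 \<phi>0 d1 b M z T s x) t
              \<le> integral UNIV (\<lambda>y. k (y - x) * usub \<xi> c \<mu> \<mu>1 \<phi> \<phi>1 \<phi>0 d1 b M z T t y)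
                - usub \<xi> c \<mu> \<mu>1 \<phi> \<phi>1 \<phi>0 d1 b M z T t x
                + usub \<xi> c \<mu> \<mu>1 \<phi> \<phi>1 \<phi>0 d1 b M z T t x
                  * f (x + z) (usub \<xi> c \<mu> \<mu>1 \<phi> \<phi>1 \<phi>0 d1 b M z T t x)))"
proof (rule allI, rule allI, rule impI)
  fix z :: "real^'n" and T :: real
  assume Tpos: "T > 0"
  define vs where "vs = vsub \<xi> c \<mu> \<mu>1 \<phi> \<phi>1 d1 z T"
  define us where "us = usub \<xi> c \<mu> \<mu>1 \<phi> \<phi>1 \<phi>0 d1 b M z T"
  define g0 where "g0 y = b * \<phi>0 (y + z)" for y
  obtain Dk where Dk: "\<forall>q\<in>UNIV. (k has_derivative blinfun_apply (Dk q)) (at q within UNIV)"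
    using k_C1 unfolding C1_on_def by blast
  have kcont: "continuous_on UNIV k"
    using Dk has_derivative_continuous continuous_on_eq_continuous_within by blast
  have knn: "k w \<ge> 0" for w
    using k_pos k_zero by (cases "norm w < \<delta>0") (auto simp: not_less intro: less_imp_le)
  have phic: "continuous_on UNIV \<phi>" "continuous_on UNIV \<phi>1" "continuous_on UNIV \<phi>0"
    using \<phi>_eig(1) \<phi>1_eig(1) \<phi>0_eig(1) by (auto simp: Xp_def)
  have phiz: "continuous_on UNIV (\<lambda>y. \<phi> (y + z))" "continuous_on UNIV (\<lambda>y. \<phi>1 (y + z))"
      "continuous_on UNIV (\<lambda>y. \<phi>0 (y + z))"
    by (rule continuous_on_compose2[OF phic(1)] continuous_on_compose2[OF phic(2)]
         continuous_on_compose2[OF phic(3)]; auto intro!: continuous_intros)+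
  have phi0_le: "\<phi>0 y \<le> 1" for y
  proof -
    have "bdd_above (range \<phi>0)"
      by (rule bounded_imp_bdd_above[OF per_bounded[OF \<phi>0_eig(1) p_pos]])
    then show ?thesis using \<phi>0_eig(4) cSup_upper[of "\<phi>0 y" "range \<phi>0"] by auto
  qed
  have g0_le: "g0 y \<le> b" for y
    using phi0_le[of "y + z"] b_pos by (simp add: g0_def)
  have vs_eq: "vs t y = exp (- \<mu> * (y \<bullet> \<xi> + c * T - c * t)) * \<phi> (y + z)
     - d1 * exp (- \<mu>1 * (y \<bullet> \<xi> + c * T - c * t)) * \<phi>1 (y + z)" for t y
    by (simp add: vs_def vsub_def)
  have us_eq: "us t y = (if y \<bullet> \<xi> + c * T - c * t < M then max (g0 y) (vs t y) else vs t y)" for t y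
    by (simp add: us_def vs_def usub_def g0_def)
  have strip: "g0 y \<le> vs t y" if "M - 2 * \<delta>0 \<le> y \<bullet> \<xi> + c * T - c * t" "y \<bullet> \<xi> + c * T - c * t \<le> M" for t y
    using M_prop that g0_le[of y] unfolding vs_def by (meson order_trans)
  have us_ge: "vs t y \<le> us t y" for t y by (simp add: us_eq)
  have us_v: "us t y = vs t y" if "M - 2 * \<delta>0 \<le> y \<bullet> \<xi> + c * T - c * t" for t y
    using strip[where t=t and y=y] that by (auto simp: us_eq)
  have us_max: "us t y = max (g0 y) (vs t y)" if "y \<bullet> \<xi> + c * T - c * t < M" for t y
    using that by (simp add: us_eq)
  have vs_cont_y: "continuous_on UNIV (\<lambda>y. vs t y)" for t
    unfolding vs_eq by (intro continuous_intros phiz)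
  have g0_cont: "continuous_on UNIV g0"
    unfolding g0_def by (intro continuous_intros phiz)
  have us_cont_y: "continuous_on UNIV (\<lambda>y. us t y)" for t
  proof -
    have "continuous_on UNIV (\<lambda>y. if y \<bullet> \<xi> + c * T - c * t < M then max (g0 y) (vs t y) else vs t y)"
      by (rule glue_cont) (auto intro!: continuous_intros vs_cont_y g0_cont strip simp: \<delta>0_pos less_imp_le)
    then show ?thesis by (simp add: us_eq)
  qed
  have int_us: "(\<lambda>y. k (y - x) * us t y) integrable_on UNIV" for t x
    by (rule int_compact[OF kcont us_cont_y]) (use k_zero in auto)
  have int_vs: "(\<lambda>y. k (y - x) * vs t y) integrable_on UNIV" for t x
    by (rule int_compact[OF kcont vs_cont_y]) (use k_zero in auto)
  have int_g0: "(\<lambda>y. k (y - x) * g0 y) integrable_on UNIV" for x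
    by (rule int_compact[OF kcont g0_cont]) (use k_zero in auto)
  have main: "continuous_on UNIV (\<lambda>t. us t x)
         \<and> (AE t in lborel. (\<lambda>t. us t x) differentiable (at t))
         \<and> (\<forall>t. (\<lambda>t. us t x) differentiable (at t) \<longrightarrow>
              deriv (\<lambda>s. us s x) t
              \<le> integral UNIV (\<lambda>y. k (y - x) * us t y) - us t x + us t x * f (x + z) (us t x))" for x
  proof -
    define S where "S t = x \<bullet> \<xi> + c * T - c * t" for t
    define V where "V t = vs t x" for t
    define V1 where "V1 t = exp (- \<mu> * S t) * (\<mu> * c) * \<phi> (x + z)
         - d1 * (exp (- \<mu>1 * S t) * (\<mu>1 * c)) * \<phi>1 (x + z)" for t
    define g where "g = g0 x"
    have SC: "continuous_on UNIV S" unfolding S_def by (intro continuous_intros)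
    have VD: "(V has_field_derivative V1 t) (at t)" for t
      unfolding V_def vs_eq V1_def S_def
      by (auto intro!: derivative_eq_intros simp: algebra_simps)
    have VC: "continuous_on UNIV V"
      using VD by (meson DERIV_isCont continuous_at_imp_continuous_on)
    have V1C: "continuous_on UNIV V1" unfolding V1_def by (intro continuous_intros SC)
    have diffI: "h differentiable (at t)" if "(h has_field_derivative D) (at t)" for h :: "real \<Rightarrow> real" and t D
      using that by (metis DERIV_deriv_iff_real_differentiable DERIV_imp_deriv)
    have uT: "us t x = (if S t < M then max g (V t) else V t)" for t
      by (simp add: us_eq S_def V_def g_def)
    have C: "continuous_on UNIV (\<lambda>t. us t x)"
    proof -
      have "continuous_on UNIV (\<lambda>t. if S t < M then max g (V t) else V t)"
        by (rule glue_cont[OF SC VC continuous_on_const]) (use strip[where y=x] \<delta>0_pos in \<open>simp add: g_def V_def S_def\<close>)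
      then show ?thesis by (simp add: uT)
    qed
    define Z where "Z = {t. V t = g \<and> V1 t \<noteq> 0}"
    have dZ: "(\<lambda>t. us t x) differentiable (at t)" if "t \<notin> Z" for t
    proof (cases "M - 2 * \<delta>0 < S t")
      case True
      have "(V has_field_derivative V1 t) (at t)" by (rule VD)
      then have "((\<lambda>t. us t x) has_field_derivative V1 t) (at t)"
      proof (rule has_field_derivative_transform_within_open)
        show "open {s. M - 2 * \<delta>0 < S s}" using SC by (simp add: open_Collect_less)
        show "t \<in> {s. M - 2 * \<delta>0 < S s}" using True by simp
        show "V s = us s x" if "s \<in> {s. M - 2 * \<delta>0 < S s}" for s
          using that us_v[where t=s and y=x] by (simp add: V_def S_def)
      qed
      then show ?thesis by (rule diffI)
    next
      case False
      then have St: "S t < M" using \<delta>0_pos by simp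
      have O: "open {s. S s < M}" using SC by (simp add: open_Collect_less)
      have eqO: "max g (V s) = us s x" if "s \<in> {s. S s < M}" for s
        using that by (simp add: uT)
      consider "V t > g" | "V t < g" | "V t = g" by linarith
      then show ?thesis
      proof cases
        case 1
        have "((\<lambda>t. us t x) has_field_derivative V1 t) (at t)"
        proof (rule has_field_derivative_transform_within_open[OF VD])
          show "open ({s. S s < M} \<inter> {s. g < V s})" using O VC by (auto intro!: open_Collect_less)
          show "t \<in> {s. S s < M} \<inter> {s. g < V s}" using St 1 by simp
          show "V s = us s x" if "s \<in> {s. S s < M} \<inter> {s. g < V s}" for s
            using that eqO[of s] by auto
        qed
        then show ?thesis by (rule diffI)
      next
        case 2
        have "((\<lambda>t. us t x) has_field_derivative 0) (at t)"
        proof (rule has_field_derivative_transform_within_open[OF DERIV_const[of g]])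
          show "open ({s. S s < M} \<inter> {s. V s < g})" using O VC by (auto intro!: open_Collect_less)
          show "t \<in> {s. S s < M} \<inter> {s. V s < g}" using St 2 by simp
          show "g = us s x" if "s \<in> {s. S s < M} \<inter> {s. V s < g}" for s
            using that eqO[of s] by auto
        qed
        then show ?thesis by (rule diffI)
      next
        case 3
        then have "V1 t = 0" using that by (simp add: Z_def)
        then have "((\<lambda>s. max g (V s)) has_field_derivative 0) (at t)"
          using max_deriv0[of V t g] VD[of t] 3 by simp
        then have "((\<lambda>t. us t x) has_field_derivative 0) (at t)"
          by (rule has_field_derivative_transform_within_open[OF _ O]) (use St eqO in auto)
        then show ?thesis by (rule diffI)
      qed
    qed
    have AE: "AE t in lborel. (\<lambda>t. us t x) differentiable (at t)"
    proof -
      define D where "D = {t. V1 t \<noteq> 0}"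
      have oD: "open D" unfolding D_def using V1C by (simp add: open_Collect_neq)
      have "Z sparse_in D"
        unfolding sparse_in_open[OF oD]
      proof
        fix y assume "y \<in> D"
        have ev: "\<forall>\<^sub>F s in at y. V s \<noteq> g"
        proof (cases "V y = g")
          case False
          have "(V \<longlongrightarrow> V y) (at y)" using VC by (meson continuous_on_def UNIV_I tendsto_within_open open_UNIV continuous_on_interior interior_UNIV isCont_def)
          then show ?thesis using False by (rule tendsto_imp_eventually_ne)
        next
          case True
          have "((\<lambda>s. (V s - V y) / (s - y)) \<longlongrightarrow> V1 y) (at y)"
            using VD[of y] by (simp add: has_field_derivative_iff)
          then have "\<forall>\<^sub>F s in at y. (V s - V y) / (s - y) \<noteq> 0"
            using \<open>y \<in> D\<close> by (intro tendsto_imp_eventually_ne) (auto simp: D_def)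
          then show ?thesis by (rule eventually_mono) (use True in auto)
        qed
        have "\<forall>\<^sub>F s in at y. s \<notin> Z" using ev by (rule eventually_mono) (auto simp: Z_def)
        then show "\<not> y islimpt Z" by (simp add: islimpt_iff_eventually)
      qed
      then have "countable (D \<inter> Z)" by (rule sparse_imp_countable[OF oD])
      moreover have "D \<inter> Z = Z" by (auto simp: D_def Z_def)
      ultimately have "Z \<in> null_sets lborel" by (simp add: countable_imp_null_set_lborel)
      then show ?thesis by (rule AE_I') (use dZ in auto)
    qed
    have IQ: "deriv (\<lambda>s. us s x) t
              \<le> integral UNIV (\<lambda>y. k (y - x) * us t y) - us t x + us t x * f (x + z) (us t x)"
      if dt: "(\<lambda>t. us t x) differentiable (at t)" for t
    proof -
      define Du where "Du = deriv (\<lambda>s. us s x) t"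
      have UD: "((\<lambda>s. us s x) has_field_derivative Du) (at t)"
        using dt unfolding Du_def by (simp add: DERIV_deriv_iff_real_differentiable)
      show ?thesis
      proof (cases "us t x = V t")
        case True
        have "((\<lambda>s. us s x - V s) has_field_derivative Du - V1 t) (at t)"
          by (rule DERIV_diff[OF UD VD])
        then have "Du - V1 t = 0"
          by (rule DERIV_local_min[of _ _ _ 1]) (use True us_ge in \<open>auto simp: V_def\<close>)
        moreover have "deriv (\<lambda>s. vs s x) t = V1 t"
          using VD[of t] DERIV_imp_deriv unfolding V_def by blast
        moreover have "deriv (\<lambda>s. vs s x) t \<le> integral UNIV (\<lambda>y. k (y - x) * vs t y)
                 - vs t x + vs t x * f (x + z) (vs t x)"
          using d0 d1 Tpos unfolding vs_def by blast
        moreover have "integral UNIV (\<lambda>y. k (y - x) * vs t y) \<le> integral UNIV (\<lambda>y. k (y - x) * us t y)"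
          by (rule integral_le[OF int_vs int_us]) (simp add: mult_left_mono knn us_ge)
        ultimately show ?thesis using True unfolding Du_def V_def by simp
      next
        case False
        then have St: "S t < M" using uT[of t] by (auto split: if_splits)
        then have ut: "us t x = g" "V t < g" using False uT[of t] by (auto simp: max_def split: if_splits)
        have St2: "S t < M - 2 * \<delta>0"
        proof (rule ccontr)
          assume "\<not> S t < M - 2 * \<delta>0"
          then have "g \<le> V t" using strip[where t=t and y=x] St by (simp add: S_def V_def g_def)
          then show False using ut by simp
        qed
        define dd where "dd = (M - S t) / (\<bar>c\<bar> + 1)"
        have ddpos: "dd > 0" using St by (simp add: dd_def)
        have "Du = 0"
        proof (rule DERIV_local_min[OF UD ddpos], intro allI impI)
          fix s assume "\<bar>t - s\<bar> < dd"
          then have "\<bar>c\<bar> * \<bar>t - s\<bar> \<le> \<bar>c\<bar> * dd" by (simp add: mult_left_mono)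
          also have "\<dots> < (\<bar>c\<bar> + 1) * dd" using ddpos by simp
          also have "\<dots> = M - S t" by (simp add: dd_def)
          finally have "\<bar>c\<bar> * \<bar>t - s\<bar> < M - S t" .
          moreover have "S s = S t + c * (t - s)" by (simp add: S_def algebra_simps)
          moreover have "c * (t - s) \<le> \<bar>c\<bar> * \<bar>t - s\<bar>" by (metis abs_ge_self abs_mult)
          ultimately have "S s < M" by linarith
          then show "us t x \<le> us s x" using ut uT[of s] by simp
        qed
        have bs: "0 \<le> integral UNIV (\<lambda>y. k (y - x) * g0 y) - g + f (x + z) g * g"
          using b_sub unfolding g_def g0_def by blast
        have "integral UNIV (\<lambda>y. k (y - x) * g0 y) \<le> integral UNIV (\<lambda>y. k (y - x) * us t y)"
        proof (rule integral_le[OF int_g0 int_us])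
          fix y
          show "k (y - x) * g0 y \<le> k (y - x) * us t y"
          proof (cases "norm (y - x) < \<delta>0")
            case True
            have "(y - x) \<bullet> \<xi> \<le> norm (y - x) * norm \<xi>" by (rule norm_cauchy_schwarz)
            then have "(y - x) \<bullet> \<xi> < \<delta>0" using True \<xi>_unit by simp
            then have "y \<bullet> \<xi> + c * T - c * t < M"
              using St2 \<delta>0_pos by (simp add: S_def inner_diff_left)
            then have "g0 y \<le> us t y" using us_max by simp
            then show ?thesis by (simp add: mult_left_mono knn)
          next
            case False
            then show ?thesis using k_zero by simp
          qed
        qed
        then show ?thesis using bs ut \<open>Du = 0\<close> unfolding Du_def by (simp add: mult.commute)
      qed
    qed
    show ?thesis using C AE IQ by blast
  qed
  show "\<forall>x. continuous_on UNIV (\<lambda>t. usub \<xi> c \<mu> \<mu>1 \<phi> \<phi>1 \<phi>0 d1 b M z T t x)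
         \<and> (AE t in lborel. (\<lambda>t. usub \<xi> c \<mu> \<mu>1 \<phi> \<phi>1 \<phi>0 d1 b M z T t x) differentiable (at t))
         \<and> (\<forall>t. (\<lambda>t. usub \<xi> c \<mu> \<mu>1 \<phi> \<phi>1 \<phi>0 d1 b M z T t x) differentiable (at t) \<longrightarrow>
              deriv (\<lambda>s. usub \<xi> c \<mu> \<mu>1 \<phi> \<phi>1 \<phi>0 d1 b M z T s x) t
              \<le> integral UNIV (\<lambda>y. k (y - x) * usub \<xi> c \<mu> \<mu>1 \<phi> \<phi>1 \<phi>0 d1 b M z T t y)
                - usub \<xi> c \<mu> \<mu>1 \<phi> \<phi>1 \<phi>0 d1 b M z T t x
                + usub \<xi> c \<mu> \<mu>1 \<phi> \<phi>1 \<phi>0 d1 b M z T t x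
                  * f (x + z) (usub \<xi> c \<mu> \<mu>1 \<phi> \<phi>1 \<phi>0 d1 b M z T t x))"
    using main unfolding us_def by blast
qed

end
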